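(* Let $r$ be a Hermitian symmetric polynomial in one complex variable with $r(p,\overline p)=0$ for some $p\in\mathbb{C}$. If $r\in\mathcal{Q}'(1)$, then $r$ is divisible, as a polynomial in $z$ and $\overline z$, by $|z-p|^2=(z-p)(\overline z-\overline p)$.
   Context: $\mathcal{Q}'(1)$: Hermitian symmetric polynomials $r$ in one variable with $r(z,\overline z)\ge0$ for all $z$ for which there exist a Hermitian symmetric polynomial $s\ge0$, not identically $0$, and a holomorphic polynomial mapping $F$ with $rs=\|F\|^2$. *)

theory Defs
  imports Complex_Main "HOL-Computational_Algebra.Polynomial"
begin

text \<open>A polynomial in the two independent variables z and w (w standing for conj z)
  is represented as a complex poly poly: the outer variable is w, the inner one z.
  The coefficient of z^j w^k is coeff (coeff r k) j.\<close>

type_synonym hpoly = "complex poly poly"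

definition herm_sym :: "hpoly \<Rightarrow> bool" where
  "herm_sym r \<longleftrightarrow> (\<forall>j k. coeff (coeff r k) j = cnj (coeff (coeff r j) k))"

definition heval :: "hpoly \<Rightarrow> complex \<Rightarrow> complex" where
  "heval r z = poly (poly r [:cnj z:]) z"

definition hnonneg :: "hpoly \<Rightarrow> bool" where
  "hnonneg r \<longleftrightarrow> (\<forall>z. Im (heval r z) = 0 \<and> 0 \<le> Re (heval r z))"

text \<open>The polynomial f(z) * conj(f)(w), i.e. |f(z)|^2 on the diagonal.\<close>
definition hsq1 :: "complex poly \<Rightarrow> hpoly" where
  "hsq1 f = [:f:] * map_poly (\<lambda>c. [:cnj c:]) f"

definition hnormsq :: "complex poly list \<Rightarrow> hpoly" where
  "hnormsq F = sum_list (map hsq1 F)"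

definition Q'1 :: "hpoly \<Rightarrow> bool" where
  "Q'1 r \<longleftrightarrow> herm_sym r \<and> hnonneg r \<and>
     (\<exists>s F. herm_sym s \<and> hnonneg s \<and> s \<noteq> 0 \<and> r * s = hnormsq F)"

end

theory Submission imports Defs "HOL-Computational_Algebra.Polynomial_Factorial" "HOL-Computational_Algebra.Field_as_Ring" begin

definition E :: "hpoly \<Rightarrow> complex \<Rightarrow> complex \<Rightarrow> complex" where
  "E x z w = poly (poly x [:w:]) z"

lemma E_mult: "E (x*y) z w = E x z w * E y z w"
  by (simp add: E_def)
lemma E_add: "E (x+y) z w = E x z w + E y z w"
  by (simp add: E_def)

lemma poly_bound: "degree (q::complex poly) \<le> N \<Longrightarrow> poly q x = (\<Sum>i\<le>N. coeff q i * x ^ i)"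
  unfolding poly_altdef
  by (rule sum.mono_neutral_left) (auto simp: coeff_eq_0)

lemma poly_bound2: "degree (q::complex poly poly) \<le> N \<Longrightarrow> poly q x = (\<Sum>i\<le>N. coeff q i * x ^ i)"
  unfolding poly_altdef
  by (rule sum.mono_neutral_left) (auto simp: coeff_eq_0)

lemma E_swap: "E x z w = poly (map_poly (\<lambda>c. poly c z) x) w"
  unfolding E_def
proof (induction x)
  case (pCons a x)
  then show ?case by (simp add: map_poly_pCons algebra_simps)
qed simp

lemma E_sum:
  assumes "degree x \<le> N" "\<And>k. degree (coeff x k) \<le> N"
  shows "E x z w = (\<Sum>k\<le>N. \<Sum>j\<le>N. coeff (coeff x k) j * z ^ j * w ^ k)"
proof -
  have "poly x [:w:] = (\<Sum>k\<le>N. coeff x k * [:w:] ^ k)" by (rule poly_bound2[OF assms(1)])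
  hence "E x z w = (\<Sum>k\<le>N. poly (coeff x k) z * w ^ k)"
    by (simp add: E_def poly_sum)
  also have "\<dots> = (\<Sum>k\<le>N. \<Sum>j\<le>N. coeff (coeff x k) j * z ^ j * w ^ k)"
    by (simp add: poly_bound[OF assms(2)] sum_distrib_right)
  finally show ?thesis .
qed

lemma herm_E:
  assumes "herm_sym r"
  shows "E r z w = cnj (E r (cnj w) (cnj z))"
proof -
  let ?N = "degree r"
  have c: "coeff (coeff r k) j = cnj (coeff (coeff r j) k)" for j k
    using assms unfolding herm_sym_def by blast
  have d: "degree (coeff r k) \<le> ?N" for k
  proof (rule degree_le, intro allI impI)
    fix j assume "?N < j"
    hence "coeff r j = 0" by (simp add: coeff_eq_0)
    thus "coeff (coeff r k) j = 0" using c[of k j] by simp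
  qed
  have "cnj (E r (cnj w) (cnj z)) = (\<Sum>k\<le>?N. \<Sum>j\<le>?N. cnj (coeff (coeff r k) j) * w ^ j * z ^ k)"
    by (simp add: E_sum[OF order_refl d])
  also have "\<dots> = (\<Sum>k\<le>?N. \<Sum>j\<le>?N. coeff (coeff r j) k * z ^ k * w ^ j)"
    by (simp add: c[symmetric] mult_ac)
  also have "\<dots> = (\<Sum>j\<le>?N. \<Sum>k\<le>?N. coeff (coeff r j) k * z ^ k * w ^ j)"
    by (rule sum.swap)
  also have "\<dots> = E r z w"
    by (simp add: E_sum[OF order_refl d])
  finally show ?thesis by simp
qed

lemma dvd1I: "(\<And>w. E x p w = 0) \<Longrightarrow> [:[:-p,1:]:] dvd x"
proof -
  assume h: "\<And>w. E x p w = 0"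
  hence "map_poly (\<lambda>c. poly c p) x = 0" using poly_all_0_iff_0 by (metis E_swap)
  hence "poly (coeff x n) p = 0" for n
    by (metis coeff_0 coeff_map_poly poly_0)
  thus ?thesis by (simp add: const_poly_dvd_iff poly_eq_0_iff_dvd)
qed

lemma dvd2I: "(\<And>z. E x z c = 0) \<Longrightarrow> [:[:-c:],1:] dvd x"
proof -
  assume h: "\<And>z. E x z c = 0"
  hence "poly x [:c:] = 0" using poly_all_0_iff_0 unfolding E_def by blast
  thus ?thesis using poly_eq_0_iff_dvd[of x "[:c:]"] by simp
qed

lemma dvd1D: "[:[:-p,1:]:] dvd x \<Longrightarrow> E x p w = 0"
  by (auto simp: E_mult E_def)
lemma dvd2D: "[:[:-c:],1:] dvd x \<Longrightarrow> E x z c = 0"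
  by (auto simp: E_mult E_def)

lemma map_cnj_eval: "poly (map_poly (\<lambda>c. [:cnj c:]) f) [:w:] = [:cnj (poly f (cnj w)):]"
  by (induction f) (auto simp: map_poly_pCons)

lemma E_hsq1: "E (hsq1 f) z w = poly f z * cnj (poly f (cnj w))"
  by (simp add: E_def hsq1_def map_cnj_eval)

lemma E_hnormsq: "E (hnormsq F) z (cnj z) = of_real (\<Sum>f\<leftarrow>F. (cmod (poly f z))^2)"
proof (induction F)
  case Nil
  then show ?case by (simp add: hnormsq_def E_def)
next
  case (Cons f F)
  have "E (hnormsq (f # F)) z (cnj z) = E (hsq1 f) z (cnj z) + E (hnormsq F) z (cnj z)"
    by (simp add: hnormsq_def E_add)
  also have "E (hsq1 f) z (cnj z) = of_real ((cmod (poly f z))^2)"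
    using complex_norm_square[of "poly f z"] by (simp add: E_hsq1)
  finally show ?case using Cons by simp
qed

lemma sum_list_pos:
  "(\<forall>x\<in>set xs. 0 \<le> (g x::real)) \<Longrightarrow> (\<exists>x\<in>set xs. 0 < g x) \<Longrightarrow> 0 < sum_list (map g xs)"
proof (induction xs)
  case (Cons a xs)
  have nn: "0 \<le> sum_list (map g xs)"
    using Cons.prems(1) by (intro sum_list_nonneg) auto
  show ?case
  proof (cases "0 < g a")
    case True
    then show ?thesis using nn by simp
  next
    case False
    hence "0 < sum_list (map g xs)" using Cons by auto
    then show ?thesis using Cons.prems(1) by simp
  qed
qed simp

lemma E_diff: "E (x - y) z w = E x z w - E y z w"
  by (simp add: E_def)

lemma E_zero: assumes "\<And>z w. E x z w = 0" shows "x = 0"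
proof (rule poly_eqI)
  fix k
  have "map_poly (\<lambda>c. poly c z) x = 0" for z
    using assms poly_all_0_iff_0 by (metis E_swap)
  hence "poly (coeff x k) z = 0" for z
    by (metis coeff_0 coeff_map_poly poly_0)
  thus "coeff x k = coeff 0 k" using poly_all_0_iff_0 by auto
qed

lemma E_inj: assumes "\<And>z w. E x z w = E y z w" shows "x = y"
  using E_zero[of "x - y"] assms by (simp add: E_diff)

lemma E_P1: "E [:[:-p,1:]:] z w = z - p"
  by (simp add: E_def)
lemma E_P2: "E [:[:-c:],1:] z w = w - c"
  by (simp add: E_def)

lemma hsq1_lin:
  "hsq1 ([:-p,1:] * g) = [:[:-p,1:]:] * [:[:-cnj p:],1:] * hsq1 g"
  by (rule E_inj) (simp only: E_hsq1 E_mult E_P1 E_P2, simp add: algebra_simps)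

lemma hnormsq_lin:
  "hnormsq (map (\<lambda>f. [:-p,1:] * f) G) = [:[:-p,1:]:] * [:[:-cnj p:],1:] * hnormsq G"
proof -
  define c where "c = [:[:-p,1:]:] * [:[:-cnj p:],1:]"
  define a where "a = [:-p,1:]"
  have h: "hsq1 (a * g) = c * hsq1 g" for g unfolding a_def c_def by (rule hsq1_lin)
  have "hnormsq (map (\<lambda>f. a * f) G) = c * hnormsq G"
    by (induction G) (simp_all only: hnormsq_def list.map sum_list.Cons sum_list.Nil h distrib_left mult_zero_right)
  thus ?thesis unfolding a_def c_def .
qed

lemma prime_P1: "prime_elem ([:[:-p,1:]:] :: hpoly)"
  by (simp add: prime_elem_const_poly_iff prime_elem_linear_field_poly)

lemma prime_P2: "prime_elem ([:[:-c:],1:] :: hpoly)"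
  by (rule prime_elem_linear_poly) simp_all

lemma herm_dvd:
  assumes "herm_sym r"
  shows "[:[:-p,1:]:] dvd r \<longleftrightarrow> [:[:-cnj p:],1:] dvd r"
proof
  assume "[:[:-p,1:]:] dvd r"
  hence "E r p w = 0" for w by (rule dvd1D)
  hence "E r z (cnj p) = 0" for z using herm_E[OF assms, of z "cnj p"] by simp
  thus "[:[:-cnj p:],1:] dvd r" by (rule dvd2I)
next
  assume "[:[:-cnj p:],1:] dvd r"
  hence "E r z (cnj p) = 0" for z by (rule dvd2D)
  hence "E r p w = 0" for w using herm_E[OF assms, of p w] by simp
  thus "[:[:-p,1:]:] dvd r" by (rule dvd1I)
qed

lemma main_contra:
  assumes n1: "\<not> [:[:-p,1:]:] dvd r" and n2: "\<not> [:[:-cnj p:],1:] dvd r"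
    and z: "E r p (cnj p) = 0"
  shows "degree s = n \<Longrightarrow> s \<noteq> 0 \<Longrightarrow> r * s = hnormsq F \<Longrightarrow> False"
proof (induction n arbitrary: s F rule: less_induct)
  case (less n)
  show False
  proof (cases "\<exists>f\<in>set F. poly f p \<noteq> 0")
    case True
    have "E (r * s) p (cnj p) = 0" by (simp add: E_mult z)
    hence "(\<Sum>f\<leftarrow>F. (cmod (poly f p))^2) = 0"
      using less.prems(3) E_hnormsq[of F p] by simp
    moreover have "0 < (\<Sum>f\<leftarrow>F. (cmod (poly f p))^2)"
      using True by (intro sum_list_pos) auto
    ultimately show False by simp
  next
    case False
    define G where "G = map (\<lambda>f. f div [:-p,1:]) F"
    have "F = map (\<lambda>f. [:-p,1:] * f) G"
      unfolding G_def map_map o_def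
    proof (rule map_idI[symmetric])
      fix f assume "f \<in> set F"
      hence "[:-p,1:] dvd f" using False poly_eq_0_iff_dvd by blast
      thus "[:-p,1:] * (f div [:-p,1:]) = f" by (rule dvd_mult_div_cancel)
    qed
    hence eq: "r * s = [:[:-p,1:]:] * [:[:-cnj p:],1:] * hnormsq G"
      using less.prems(3) hnormsq_lin by metis
    hence "[:[:-p,1:]:] dvd r * s" by (metis dvd_mult_left dvd_triv_left)
    hence "[:[:-p,1:]:] dvd s" using n1 prime_P1 prime_elem_dvd_mult_iff by blast
    then obtain s1 where s1: "s = [:[:-p,1:]:] * s1" by (rule dvdE)
    have "[:[:-p,1:]:] * (r * s1) = [:[:-p,1:]:] * ([:[:-cnj p:],1:] * hnormsq G)"
      using eq unfolding s1 by (simp only: mult_ac)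
    hence eq1: "r * s1 = [:[:-cnj p:],1:] * hnormsq G"
      by (rule mult_left_cancel[THEN iffD1, rotated]) simp
    hence "[:[:-cnj p:],1:] dvd r * s1" by (metis dvd_triv_left)
    hence "[:[:-cnj p:],1:] dvd s1" using n2 prime_P2 prime_elem_dvd_mult_iff by blast
    then obtain s2 where s2: "s1 = [:[:-cnj p:],1:] * s2" by (rule dvdE)
    have "[:[:-cnj p:],1:] * (r * s2) = [:[:-cnj p:],1:] * hnormsq G"
      using eq1 unfolding s2 by (simp only: mult_ac)
    hence eq2: "r * s2 = hnormsq G"
      by (rule mult_left_cancel[THEN iffD1, rotated]) simp
    have "s2 \<noteq> 0" using less.prems(2) s1 s2 by auto
    have "degree s = degree s2 + 1"
      using less.prems(2) unfolding s1 s2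
      by (subst degree_mult_eq, simp, simp, subst degree_mult_eq, auto)
    hence "degree s2 < n" using less.prems(1) by simp
    thus False using less.IH[OF _ refl \<open>s2 \<noteq> 0\<close> eq2] by blast
  qed
qed

lemma coprime_P12: "coprime ([:[:-p,1:]:] :: hpoly) [:[:-cnj p:],1:]"
proof (rule prime_elem_imp_coprime[OF prime_P1])
  show "\<not> [:[:-p,1:]:] dvd ([:[:-cnj p:],1:] :: hpoly)"
  proof
    assume "[:[:-p,1:]:] dvd ([:[:-cnj p:],1:] :: hpoly)"
    hence "E [:[:-cnj p:],1:] p (cnj p + 1) = 0" by (rule dvd1D)
    thus False by (simp add: E_P2)
  qed
qed

theorem lemma4p2:
  fixes r :: hpoly and p :: complex
  assumes "herm_sym r"
    and "heval r p = 0"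
    and "Q'1 r"
  shows "[:[:- p, 1:]:] * [:[:- cnj p:], 1:] dvd r"
proof -
  from assms(3) obtain s F where "s \<noteq> 0" "r * s = hnormsq F"
    unfolding Q'1_def by blast
  have z: "E r p (cnj p) = 0" using assms(2) by (simp add: heval_def E_def)
  have d1: "[:[:-p,1:]:] dvd r"
  proof (rule ccontr)
    assume n1: "\<not> [:[:-p,1:]:] dvd r"
    hence n2: "\<not> [:[:-cnj p:],1:] dvd r" using herm_dvd[OF assms(1)] by blast
    show False using main_contra[OF n1 n2 z refl \<open>s \<noteq> 0\<close> \<open>r * s = hnormsq F\<close>] .
  qed
  hence d2: "[:[:-cnj p:],1:] dvd r" using herm_dvd[OF assms(1)] by blast
  show ?thesis using divides_mult[OF d1 d2 coprime_P12[of p]] by simp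
qed

end
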